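(* Let $p\equiv 1\pmod 4$ be a prime, let $\zeta=e^{2\pi\mathbf i/(p-1)}$, and let $g\in\{1,\ldots,p-1\}$ be an integer that is a primitive root modulo $p$. Suppose $\mathfrak p$ is a prime ideal of the ring of integers of $\mathbb Q(\zeta)$ lying above $p$ such that $g\equiv\zeta\pmod{\mathfrak p}$. Then $$\prod_{1\le i<j\le\frac{p-1}{2}}(g^{2j}-g^{2i})\equiv e^{\frac{(p-3)(3p+1)}{16}\pi\mathbf i}\cdot\Big(\frac{p-1}{2}\Big)^{\frac{p-1}{4}}\pmod{\mathfrak p}.$$
   Context: $\mathbf i=\sqrt{-1}$. (Note $e^{\frac{(p-3)(3p+1)}{16}\pi\mathbf i}$ is a root of unity lying in $\mathbb Q(\zeta)$ when $p\equiv1\pmod 4$.) *)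

theory Defs
  imports "HOL-Complex_Analysis.Complex_Analysis" "HOL-Number_Theory.Number_Theory"
    "HOL-Algebra.Ideal"
begin

definition zeta :: "nat \<Rightarrow> complex" where
  "zeta p = exp (2 * of_real pi * \<i> / of_nat (p - 1))"

text \<open>The cyclotomic field Q(zeta), as a subfield of the complex numbers:
  all rational polynomial expressions in zeta (zeta is algebraic, so this is the
  field Q(zeta)).\<close>
definition cyc_field :: "complex \<Rightarrow> complex set" where
  "cyc_field z = {x. \<exists>q :: rat poly. x = poly (map_poly of_rat q) z}"

definition ring_of_integers :: "complex \<Rightarrow> complex set" where
  "ring_of_integers z = {x \<in> cyc_field z. algebraic_int x}"

definition OK_ring :: "complex \<Rightarrow> complex ring" where
  "OK_ring z = \<lparr>carrier = ring_of_integers z, monoid.mult = (*), one = 1,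
                 zero = 0, add = (+)\<rparr>"

end

theory Submission
  imports Defs
begin

lemma L2:
  assumes n: "n \<ge> (2::nat)"
  shows "(\<Prod>z\<in>{z::complex. z^n = 1} - {1}. (1 - z)) = of_nat n"
proof -
  define A where "A = {z::complex. z^n = 1} - {1}"
  have fin: "finite A" unfolding A_def using n by (auto intro: finite_roots_unity)
  have cA: "card A = n - 1" unfolding A_def using n card_roots_unity_eq[of n]
    by (subst card_Diff_singleton) (auto intro: finite_roots_unity)
  define p1 where "p1 = (\<Prod>z\<in>A. [:-z, 1:])"
  define p2 where "p2 = (\<Sum>i\<le>n-1. Polynomial.monom (1::complex) i)"
  have d1: "degree p1 = n - 1" unfolding p1_def
    by (subst degree_prod_sum_eq) (auto simp: cA)
  have d2: "degree p2 \<le> n - 1" unfolding p2_def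
    by (intro degree_sum_le) (auto simp: degree_monom_le intro: order.trans[OF degree_monom_le])
  have c1: "poly.coeff p1 (n-1) = 1"
  proof -
    have "poly.coeff p1 (n-1) = lead_coeff p1" using d1 by simp
    also have "\<dots> = 1" unfolding p1_def lead_coeff_prod by simp
    finally show ?thesis .
  qed
  have c2: "poly.coeff p2 (n-1) = 1" unfolding p2_def by (rule coeff_sum_monom) simp
  have "p1 = p2"
  proof (rule poly_eqI_degree_lead_coeff[of p1 "n-1" p2 A])
    fix z assume z: "z \<in> A"
    have "poly p1 z = 0" unfolding p1_def poly_prod using fin z
      by (intro prod_zero) (auto intro!: bexI[of _ z])
    moreover have "poly p2 z = (\<Sum>i<n. z ^ i)" unfolding p2_def poly_sum poly_monom
      using n by (intro sum.cong) auto
    moreover have "(\<Sum>i<n. z ^ i) = 0" using z unfolding A_def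
      by (subst geometric_sum) auto
    ultimately show "poly p1 z = poly p2 z" by simp
  qed (use c1 c2 cA d1 d2 in auto)
  hence "poly p1 1 = poly p2 1" by simp
  moreover have "poly p1 1 = (\<Prod>z\<in>A. 1 - z)" unfolding p1_def poly_prod by simp
  moreover have "poly p2 1 = of_nat n" unfolding p2_def poly_sum poly_monom using n by simp
  ultimately show ?thesis unfolding A_def by simp
qed

lemma L1:
  assumes n: "n \<ge> (2::nat)" and u: "u^n = (1::complex)"
  shows "(\<Prod>w\<in>{z::complex. z^n = 1} - {u}. (u - w)) = u^(n-1) * of_nat n"
proof -
  define R where "R = {z::complex. z^n = 1}"
  have u0: "u \<noteq> 0" using u n by (auto simp: power_0_left)
  have fin: "finite R" unfolding R_def using n by (auto intro: finite_roots_unity)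
  have cR: "card R = n" unfolding R_def using n card_roots_unity_eq[of n] by simp
  have bij: "bij_betw (\<lambda>z. u*z) (R-{1}) (R-{u})"
  proof (rule bij_betw_imageI)
    show "inj_on (\<lambda>z. u*z) (R-{1})" using u0 by (auto simp: inj_on_def)
    show "(\<lambda>z. u*z) ` (R-{1}) = R-{u}"
    proof safe
      fix w assume w: "w \<in> R" "w \<notin> (\<lambda>z. u*z) ` (R-{1})"
      have "w/u \<in> R" using w u unfolding R_def by (simp add: power_divide)
      moreover have "w = u * (w/u)" using u0 by simp
      ultimately have "w/u = 1" using w by blast
      thus "w = u" using u0 by (simp add: divide_eq_1_iff)
    qed (use u u0 in \<open>auto simp: R_def power_mult_distrib\<close>)
  qed
  have "(\<Prod>w\<in>R-{u}. (u - w)) = (\<Prod>z\<in>R-{1}. (u - u*z))"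
    by (rule prod.reindex_bij_betw[OF bij, symmetric])
  also have "\<dots> = (\<Prod>z\<in>R-{1}. u * (1 - z))" by (simp add: algebra_simps)
  also have "\<dots> = u ^ card (R-{1}) * (\<Prod>z\<in>R-{1}. (1 - z))" by (simp add: prod.distrib)
  also have "card (R-{1}) = n - 1" using fin cR n by (simp add: R_def)
  also have "(\<Prod>z\<in>R-{1}. (1 - z)) = of_nat n" unfolding R_def by (rule L2[OF n])
  finally show ?thesis unfolding R_def .
qed

lemma F1:
  assumes n: "n \<ge> (2::nat)"
  shows "bij_betw (\<lambda>j. cis (2*pi/n) ^ j) {1..n} {z::complex. z^n = 1}"
proof -
  have b0: "bij_betw (\<lambda>k. cis (2*pi/n) ^ k) {..<n} {z::complex. z^n = 1}"
  proof -
    have b: "bij_betw (\<lambda>k. cis (2 * pi * real k / real n)) {..<n} {z::complex. z ^ n = 1}"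
      by (rule Complex.bij_betw_roots_unity) (use n in simp)
    have "cis (2 * pi * real k / real n) = cis (2*pi/n) ^ k" for k
      by (subst Complex.DeMoivre) (simp add: field_simps)
    with b show ?thesis by simp
  qed
  have pw: "cis (2*pi/n) ^ n = 1" using n by (simp add: Complex.DeMoivre)
  have m: "cis (2*pi/n) ^ j = cis (2*pi/n) ^ (j mod n)" for j
  proof -
    have "cis (2*pi/n) ^ j = cis (2*pi/n) ^ (n * (j div n) + j mod n)" by simp
    also have "\<dots> = (cis (2*pi/n) ^ n) ^ (j div n) * cis (2*pi/n) ^ (j mod n)"
      by (simp only: power_add power_mult)
    also have "\<dots> = cis (2*pi/n) ^ (j mod n)" using pw by simp
    finally show ?thesis .
  qed
  have bm: "bij_betw (\<lambda>j. j mod n) {1..n} {..<n}"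
  proof (rule bij_betw_imageI)
    show "inj_on (\<lambda>j. j mod n) {1..n}"
    proof (rule inj_onI)
      fix a b assume a: "a \<in> {1..n}" and b: "b \<in> {1..n}" and e: "a mod n = b mod n"
      show "a = b"
      proof (cases "a = n \<or> b = n")
        case True thus ?thesis using a b e by (auto simp: mod_if split: if_splits)
      next
        case False thus ?thesis using a b e by auto
      qed
    qed
    show "(\<lambda>j. j mod n) ` {1..n} = {..<n}"
    proof safe
      fix k assume k: "k < n"
      show "k \<in> (\<lambda>j. j mod n) ` {1..n}"
      proof (cases "k = 0")
        case True thus ?thesis using n by (auto intro!: image_eqI[of _ _ n])
      next
        case False thus ?thesis using k by (auto intro!: image_eqI[of _ _ k])
      qed
    qed (use n in auto)
  qed
  have "bij_betw ((\<lambda>k. cis (2*pi/n) ^ k) \<circ> (\<lambda>j. j mod n)) {1..n} {z::complex. z^n = 1}"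
    by (rule bij_betw_trans[OF bm b0])
  thus ?thesis by (simp add: comp_def m[symmetric])
qed

lemma N1:
  assumes n: "n \<ge> (2::nat)"
  defines "w \<equiv> cis (2*pi/n)"
  shows "(\<Prod>(i,j)\<in>{(i,j). 1 \<le> i \<and> i < j \<and> j \<le> n}. cmod (w^j - w^i))^2 = real n ^ n"
proof -
  define S where "S = {(i,j). 1 \<le> i \<and> i < j \<and> j \<le> (n::nat)}"
  define f where "f = (\<lambda>(i::nat,j::nat). cmod (w^i - w^j))"
  have finS: "finite S" unfolding S_def
    by (rule finite_subset[of _ "{1..n} \<times> {1..n}"]) auto
  have fsym: "f (j,i) = f (i,j)" for i j by (simp add: f_def norm_minus_commute)
  have e1: "(\<Prod>(i,j)\<in>S. cmod (w^j - w^i)) = prod f S"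
    by (intro prod.cong refl) (auto simp: f_def norm_minus_commute)
  have e2: "prod f S = prod f (prod.swap ` S)"
    by (subst prod.reindex) (auto simp: comp_def fsym intro: swap_inj_on intro!: prod.cong)
  have disj: "S \<inter> prod.swap ` S = {}" by (auto simp: S_def)
  have un: "S \<union> prod.swap ` S = Sigma {1..n} (\<lambda>i. {1..n} - {i})"
    by (auto simp: S_def image_iff)
  have "(prod f S)^2 = prod f S * prod f (prod.swap ` S)" using e2 by (simp add: power2_eq_square)
  also have "\<dots> = prod f (S \<union> prod.swap ` S)"
    using finS disj by (subst prod.union_disjoint) auto
  also have "\<dots> = (\<Prod>i\<in>{1..n}. \<Prod>j\<in>{1..n}-{i}. f (i,j))"
    unfolding un using prod.Sigma[of "{1..n}" "\<lambda>i. {1..n} - {i}" "\<lambda>i j. f (i,j)"] by simp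
  also have "\<dots> = (\<Prod>i\<in>{1..n}. real n)"
  proof (intro prod.cong refl)
    fix i assume i: "i \<in> {1..n}"
    have u: "(w^i)^n = 1"
      using bij_betw_apply[OF F1[OF n] i] by (simp add: w_def)
    have bij: "bij_betw (\<lambda>j. w^j) ({1..n}-{i}) ({z::complex. z^n = 1} - {w^i})"
      by (rule bij_betw_DiffI[OF F1[OF n, folded w_def]]) (use i u in auto)
    have "(\<Prod>j\<in>{1..n}-{i}. f (i,j)) = cmod (\<Prod>j\<in>{1..n}-{i}. (w^i - w^j))"
      by (simp add: f_def prod_norm)
    also have "(\<Prod>j\<in>{1..n}-{i}. (w^i - w^j)) = (\<Prod>z\<in>{z::complex. z^n = 1} - {w^i}. (w^i - z))"
      by (rule prod.reindex_bij_betw[OF bij])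
    also have "\<dots> = (w^i)^(n-1) * of_nat n" by (rule L1[OF n u])
    also have "cmod \<dots> = real n" by (simp add: w_def norm_mult norm_power)
    finally show "(\<Prod>j\<in>{1..n}-{i}. f (i,j)) = real n" .
  qed
  also have "\<dots> = real n ^ n" by simp
  finally show ?thesis using e1 unfolding S_def by simp
qed

definition Sn :: "nat \<Rightarrow> (nat \<times> nat) set" where
  "Sn n = {(i,j). 1 \<le> i \<and> i < j \<and> j \<le> n}"

lemma Sn_Suc: "Sn (Suc n) = Sn n \<union> (\<lambda>i. (i, Suc n)) ` {1..n}"
  by (auto simp: Sn_def)

lemma Sn_0: "Sn 0 = {}" by (auto simp: Sn_def)

lemma Sn_fin: "finite (Sn n)"
  unfolding Sn_def by (rule finite_subset[of _ "{1..n} \<times> {1..n}"]) auto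

lemma Sn_disj: "Sn n \<inter> (\<lambda>i. (i, Suc n)) ` {1..n} = {}"
  by (auto simp: Sn_def)

lemma Sn_card: "2 * real (card (Sn n)) = real n * (real n - 1)"
proof (induction n)
  case 0 thus ?case by (simp add: Sn_0)
next
  case (Suc n)
  have "card (Sn (Suc n)) = card (Sn n) + n"
    unfolding Sn_Suc using Sn_fin Sn_disj
    by (subst card_Un_disjoint) (auto simp: card_image inj_on_def)
  thus ?case using Suc by (simp add: algebra_simps)
qed

lemma Sn_sum: "2 * (\<Sum>(i,j)\<in>Sn n. real i + real j) = (real n + 1) * real n * (real n - 1)"
proof (induction n)
  case 0 thus ?case by (simp add: Sn_0)
next
  case (Suc n)
  have g: "2 * (\<Sum>i\<in>{1..n}. real i) = real n * (real n + 1)"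
    by (induction n) (auto simp: algebra_simps)
  have "(\<Sum>(i,j)\<in>Sn (Suc n). real i + real j) = (\<Sum>(i,j)\<in>Sn n. real i + real j)
         + (\<Sum>i\<in>{1..n}. real i + real (Suc n))"
    unfolding Sn_Suc using Sn_fin Sn_disj
    by (subst sum.union_disjoint) (auto simp: sum.reindex inj_on_def)
  also have "(\<Sum>i\<in>{1..n}. real i + real (Suc n)) = (\<Sum>i\<in>{1..n}. real i) + real n * real (Suc n)"
    by (simp add: sum.distrib)
  finally show ?case using Suc g by (simp add: algebra_simps)
qed

lemma diff_cis:
  "cis a - cis b = exp (\<i> * complex_of_real ((a+b)/2)) * (\<i> * complex_of_real (2 * sin ((a-b)/2)))"
proof -
  have "exp (\<i> * complex_of_real ((a+b)/2)) * (\<i> * complex_of_real (2 * sin ((a-b)/2)))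
     = cis ((a+b)/2) * (\<i> * complex_of_real (2 * sin ((a-b)/2)))"
    by (simp add: cis_conv_exp mult_ac)
  also have "\<dots> = cis a - cis b"
  proof -
    define x where "x = (a+b)/2"
    define y where "y = (a-b)/2"
    have a: "a = x + y" and b: "b = x - y" by (simp_all add: x_def y_def field_simps)
    show ?thesis unfolding a b
      by (simp add: complex_eq_iff cos_add sin_add cos_diff sin_diff algebra_simps)
  qed
  finally show ?thesis by simp
qed

lemma V_formula:
  assumes m: "m \<ge> (1::nat)" and n: "n = 2*m"
  defines "w \<equiv> cis (2*pi/n)"
  shows "(\<Prod>(i,j)\<in>Sn n. w^j - w^i)
     = exp (\<i> * complex_of_real (pi * ((real n - 1)*(3*real n + 2)/4))) * of_nat n ^ m"
proof -
  have n2: "n \<ge> 2" using m n by simp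
  define A where "A = (\<lambda>(i::nat,j::nat). \<i> * complex_of_real (pi * (real i + real j) / n))"
  define B where "B = (\<lambda>(i::nat,j::nat). 2 * sin (pi * (real j - real i) / n))"
  have step: "w^j - w^i = exp (A (i,j)) * \<i> * complex_of_real (B (i,j))" for i j
  proof -
    have "w^j - w^i = cis (2*pi*j/n) - cis (2*pi*i/n)"
      unfolding w_def Complex.DeMoivre by (simp add: field_simps)
    also have "\<dots> = exp (A (i,j)) * \<i> * complex_of_real (B (i,j))"
    proof -
      have e1: "(2*pi*j/n + 2*pi*i/n)/2 = pi * (real i + real j) / n" using n2 by (simp add: field_simps)
      have e2: "(2*pi*j/n - 2*pi*i/n)/2 = pi * (real j - real i) / n" using n2 by (simp add: field_simps)
      show ?thesis unfolding diff_cis A_def B_def e1 e2 by (simp add: mult_ac)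
    qed
    finally show ?thesis .
  qed
  define N where "N = card (Sn n)"
  define R where "R = (\<Prod>x\<in>Sn n. B x)"
  define T where "T = (\<Sum>(i,j)\<in>Sn n. real i + real j)"
  have "(\<Prod>(i,j)\<in>Sn n. w^j - w^i) = (\<Prod>x\<in>Sn n. exp (A x) * \<i> * complex_of_real (B x))"
    by (intro prod.cong refl) (auto simp: step)
  also have "\<dots> = exp (sum A (Sn n)) * \<i> ^ N * complex_of_real R"
    by (simp add: prod.distrib exp_sum Sn_fin N_def R_def)
  also have "sum A (Sn n) = \<i> * complex_of_real (pi / n * T)"
    unfolding A_def T_def by (simp add: sum_distrib_left case_prod_unfold sum_divide_distrib)
  also have "\<i> ^ N = exp (\<i> * complex_of_real (pi/2 * N))"
  proof -
    have "\<i> = exp (\<i> * complex_of_real (pi/2))"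
    proof -
      have "exp (\<i> * complex_of_real (pi/2)) = cis (pi/2)" by (simp add: cis_conv_exp)
      also have "\<dots> = \<i>" by (simp add: complex_eq_iff)
      finally show ?thesis by simp
    qed
    hence "\<i> ^ N = exp (\<i> * complex_of_real (pi/2)) ^ N" by simp
    also have "\<dots> = exp (of_nat N * (\<i> * complex_of_real (pi/2)))"
      by (rule exp_of_nat_mult[symmetric])
    finally show ?thesis by (simp add: mult_ac)
  qed
  also have "exp (\<i> * complex_of_real (pi / n * T)) * exp (\<i> * complex_of_real (pi/2 * N))
           = exp (\<i> * complex_of_real (pi * ((real n - 1)*(3*real n + 2)/4)))"
  proof -
    have "pi / n * T + pi/2 * N = pi * ((real n - 1)*(3*real n + 2)/4)"
    proof -
      have hT: "T = (real n + 1) * real n * (real n - 1) / 2" using Sn_sum[of n] unfolding T_def by simp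
      have hN: "real N = real n * (real n - 1) / 2" using Sn_card[of n] unfolding N_def by simp
      have "real n > 0" using n2 by simp
      then show ?thesis unfolding hT hN by (simp add: field_simps)
    qed
    moreover have "exp (\<i> * complex_of_real (pi / n * T)) * exp (\<i> * complex_of_real (pi/2 * N))
       = exp (\<i> * complex_of_real (pi / n * T + pi/2 * N))"
      by (simp only: of_real_add distrib_left exp_add)
    ultimately show ?thesis by metis
  qed
  finally have V: "(\<Prod>(i,j)\<in>Sn n. w^j - w^i)
      = exp (\<i> * complex_of_real (pi * ((real n - 1)*(3*real n + 2)/4))) * complex_of_real R"
    by (simp add: mult_ac)
  have Rpos: "R \<ge> 0" unfolding R_def
  proof (intro prod_nonneg)
    fix x assume x: "x \<in> Sn n"
    obtain i j where x': "x = (i,j)" by fastforce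
    have h: "0 < (real j - real i) / n" "(real j - real i) / n < 1"
      using x n2 unfolding x' Sn_def by auto
    define y where "y = (real j - real i) / n"
    have "0 < pi * y" using h pi_gt_zero unfolding y_def by (intro mult_pos_pos) auto
    moreover have "pi * y < pi" using mult_strict_left_mono[of y 1 pi] h pi_gt_zero by (simp add: y_def)
    ultimately have "sin (pi * y) > 0" by (rule sin_gt_zero)
    hence "sin (pi * ((real j - real i) / n)) > 0" by (simp add: y_def)
    hence "sin (pi * (real j - real i) / n) > 0" by simp
    thus "B x \<ge> 0" unfolding B_def x' by simp
  qed
  have "cmod (\<Prod>(i,j)\<in>Sn n. w^j - w^i) = R" unfolding V using Rpos
    by (simp add: norm_mult)
  moreover have "(\<Prod>(i,j)\<in>Sn n. cmod (w^j - w^i))^2 = real n ^ n"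
    using N1[OF n2] unfolding Sn_def w_def .
  moreover have "(\<Prod>(i,j)\<in>Sn n. cmod (w^j - w^i)) = cmod (\<Prod>(i,j)\<in>Sn n. w^j - w^i)"
    by (simp add: prod_norm case_prod_unfold)
  ultimately have "R^2 = real n ^ n" by simp
  also have "real n ^ n = (real n ^ m)^2"
  proof -
    have nm: "n = m * 2" using n by simp
    show ?thesis by (metis nm power_mult)
  qed
  finally have "R^2 = (real n ^ m)^2" .
  hence "R = real n ^ m" using Rpos by (simp add: power2_eq_iff_nonneg)
  thus ?thesis unfolding V by simp
qed

locale cg =
  fixes K P :: "complex set"
  assumes K1: "1 \<in> K" and Kadd: "x \<in> K \<Longrightarrow> y \<in> K \<Longrightarrow> x + y \<in> K"
    and Kmul: "x \<in> K \<Longrightarrow> y \<in> K \<Longrightarrow> x * y \<in> K"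
    and Kneg: "x \<in> K \<Longrightarrow> -x \<in> K"
    and P0: "0 \<in> P" and PK: "P \<subseteq> K" and Padd: "x \<in> P \<Longrightarrow> y \<in> P \<Longrightarrow> x + y \<in> P"
    and Pmul: "x \<in> P \<Longrightarrow> y \<in> K \<Longrightarrow> y * x \<in> P"
begin

lemma Kdiff: "x \<in> K \<Longrightarrow> y \<in> K \<Longrightarrow> x - y \<in> K"
  using Kadd Kneg by (metis diff_conv_add_uminus)

lemma Pneg: "x \<in> P \<Longrightarrow> -x \<in> P"
  using Pmul[of x "-1"] Kneg K1 by simp

lemma Pdiff: "x \<in> P \<Longrightarrow> y \<in> P \<Longrightarrow> x - y \<in> P"
  using Padd Pneg by (metis diff_conv_add_uminus)

lemma Knat: "of_nat k \<in> K"
  by (induction k) (use K1 Kadd PK P0 in \<open>auto\<close>)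

lemma Kpow: "x \<in> K \<Longrightarrow> x ^ k \<in> K"
  by (induction k) (auto intro: K1 Kmul)

lemma cong_mult:
  assumes "a \<in> K" "b \<in> K" "c \<in> K" "d \<in> K" "a - b \<in> P" "c - d \<in> P"
  shows "a * c - b * d \<in> P"
proof -
  have "a * c - b * d = a * (c - d) + d * (a - b)" by (simp add: algebra_simps)
  thus ?thesis using assms by (auto intro!: Padd Pmul)
qed

lemma cong_pow:
  assumes "a \<in> K" "b \<in> K" "a - b \<in> P"
  shows "a ^ k - b ^ k \<in> P"
proof (induction k)
  case 0 show ?case using P0 by simp
next
  case (Suc k) thus ?case using assms by (auto intro!: cong_mult Kpow)
qed

lemma cong_prod:
  assumes "finite A" "\<And>x. x \<in> A \<Longrightarrow> f x \<in> K" "\<And>x. x \<in> A \<Longrightarrow> h x \<in> K"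
    "\<And>x. x \<in> A \<Longrightarrow> f x - h x \<in> P"
  shows "prod f A - prod h A \<in> P \<and> prod f A \<in> K \<and> prod h A \<in> K"
  using assms
proof (induction A rule: finite_induct)
  case empty show ?case using K1 P0 by simp
next
  case (insert x F) thus ?case by (auto intro!: cong_mult Kmul)
qed

end

theorem lemma2p2:
  fixes p g :: nat and P :: "complex set"
  assumes "prime p" and "p mod 4 = 1"
    and "g \<in> {1..p-1}" and "residue_primroot p g"
    and "primeideal P (OK_ring (zeta p))"
    and "of_nat p \<in> P"
    and "of_nat g - zeta p \<in> P"
  shows "(\<Prod>(i, j) \<in> {(i, j). 1 \<le> i \<and> i < j \<and> j \<le> (p - 1) div 2}.
            (of_nat g ^ (2 * j) - of_nat g ^ (2 * i) :: complex))
         - exp (of_real ((real p - 3) * (3 * real p + 1) / 16 * pi) * \<i>)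
           * (of_nat ((p - 1) div 2)) ^ ((p - 1) div 4) \<in> P"
proof -
  define z where "z = zeta p"
  define K where "K = carrier (OK_ring z)"
  interpret R: cring "OK_ring z" using assms(5) unfolding z_def by (rule primeideal.axioms)
  interpret Id: ideal P "OK_ring z" using assms(5) unfolding z_def by (rule primeideal.axioms)
  have ops: "(\<otimes>\<^bsub>OK_ring z\<^esub>) = (*)" "(\<oplus>\<^bsub>OK_ring z\<^esub>) = (+)" "\<one>\<^bsub>OK_ring z\<^esub> = 1"
     "\<zero>\<^bsub>OK_ring z\<^esub> = 0"
    by (simp_all add: OK_ring_def)
  have neg: "\<ominus>\<^bsub>OK_ring z\<^esub> x = - x" if "x \<in> K" for x
  proof -
    have "x \<oplus>\<^bsub>OK_ring z\<^esub> \<ominus>\<^bsub>OK_ring z\<^esub> x = \<zero>\<^bsub>OK_ring z\<^esub>"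
      using that unfolding K_def by (rule R.r_neg)
    thus ?thesis unfolding ops by (simp add: eq_neg_iff_add_eq_0 add.commute)
  qed
  interpret C: cg K P
  proof
    show "1 \<in> K" using R.one_closed unfolding K_def ops .
    show "x + y \<in> K" if "x \<in> K" "y \<in> K" for x y
      using R.add.m_closed[of x y] that unfolding K_def ops by simp
    show "x * y \<in> K" if "x \<in> K" "y \<in> K" for x y
      using R.m_closed[of x y] that unfolding K_def ops by simp
    show "-x \<in> K" if "x \<in> K" for x
      using R.add.inv_closed[of x] that neg[OF that] unfolding K_def by simp
    show "0 \<in> P" using Id.zero_closed unfolding ops .
    show "P \<subseteq> K" using Id.a_subset unfolding K_def .
    show "x + y \<in> P" if "x \<in> P" "y \<in> P" for x y
      using Id.a_closed[OF that] unfolding ops .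
    show "y * x \<in> P" if "x \<in> P" "y \<in> K" for x y
      using Id.I_l_closed[of x y] that unfolding K_def ops by simp
  qed
  have gK: "of_nat g \<in> K" by (rule C.Knat)
  have gz: "of_nat g - z \<in> P" using assms(7) unfolding z_def .
  have zK: "z \<in> K"
  proof -
    have "of_nat g - (of_nat g - z) \<in> K" using C.Kdiff[OF gK] gz C.PK by blast
    thus ?thesis by simp
  qed
  have p2: "p \<ge> 2" using assms(1) by (simp add: prime_ge_2_nat)
  have "4 dvd p - 1" using assms(2) p2 by presburger
  then obtain m where pm: "p - 1 = 4 * m" by (elim dvdE)
  have m1: "m \<ge> 1" using pm assms(2) p2 by (cases m) auto
  define n where "n = (p - 1) div 2"
  have nm: "n = 2 * m" using pm by (simp add: n_def)
  have m4: "(p - 1) div 4 = m" using pm by simp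
  define w where "w = cis (2*pi/n)"
  have zw: "z^2 = w"
  proof -
    have "z^2 = exp (of_nat 2 * (2 * of_real pi * \<i> / of_nat (p - 1)))"
      unfolding z_def zeta_def by (rule exp_of_nat_mult[symmetric])
    also have "of_nat 2 * (2 * of_real pi * \<i> / of_nat (p - 1)) = \<i> * complex_of_real (2*pi/n)"
      using pm nm m1 by (simp add: field_simps)
    also have "exp \<dots> = w" unfolding w_def by (simp add: cis_conv_exp)
    finally show ?thesis .
  qed
  have setS: "{(i, j). 1 \<le> i \<and> i < j \<and> j \<le> (p - 1) div 2} = Sn n"
    by (simp add: Sn_def n_def)
  have cong: "(\<Prod>(i,j)\<in>Sn n. (of_nat g ^ (2 * j) - of_nat g ^ (2 * i) :: complex))
      - (\<Prod>(i,j)\<in>Sn n. z ^ (2 * j) - z ^ (2 * i)) \<in> P"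
  proof -
    have "(\<Prod>x\<in>Sn n. (\<lambda>(i,j). (of_nat g ^ (2 * j) - of_nat g ^ (2 * i) :: complex)) x)
      - (\<Prod>x\<in>Sn n. (\<lambda>(i,j). z ^ (2 * j) - z ^ (2 * i)) x) \<in> P"
    proof (rule conjunct1[OF C.cong_prod[OF Sn_fin]])
      fix x assume "x \<in> Sn n"
      obtain i j where x: "x = (i,j)" by fastforce
      show "(\<lambda>(i,j). (of_nat g ^ (2 * j) - of_nat g ^ (2 * i) :: complex)) x \<in> K"
        unfolding x using gK by (auto intro!: C.Kdiff C.Kpow)
      show "(\<lambda>(i,j). z ^ (2 * j) - z ^ (2 * i)) x \<in> K"
        unfolding x using zK by (auto intro!: C.Kdiff C.Kpow)
      have eq: "(of_nat g ^ (2 * j) - of_nat g ^ (2 * i)) - (z ^ (2 * j) - z ^ (2 * i))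
          = (of_nat g ^ (2 * j) - z ^ (2 * j)) - (of_nat g ^ (2 * i) - z ^ (2 * i))"
        by (simp add: algebra_simps)
      have mem: "(of_nat g ^ (2 * j) - z ^ (2 * j)) - (of_nat g ^ (2 * i) - z ^ (2 * i)) \<in> P"
        by (rule C.Pdiff; rule C.cong_pow[OF gK zK gz])
      show "(\<lambda>(i,j). (of_nat g ^ (2 * j) - of_nat g ^ (2 * i) :: complex)) x
          - (\<lambda>(i,j). z ^ (2 * j) - z ^ (2 * i)) x \<in> P" unfolding x prod.case eq by (rule mem)
    qed
    thus ?thesis by (simp add: case_prod_unfold)
  qed
  have Z: "(\<Prod>(i,j)\<in>Sn n. z ^ (2 * j) - z ^ (2 * i)) = (\<Prod>(i,j)\<in>Sn n. w ^ j - w ^ i)"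
    by (simp add: power_mult zw)
  have VV: "(\<Prod>(i,j)\<in>Sn n. w ^ j - w ^ i)
     = exp (\<i> * complex_of_real (pi * ((real n - 1)*(3*real n + 2)/4))) * of_nat n ^ m"
    unfolding w_def by (rule V_formula[OF m1 nm])
  have ex: "exp (of_real ((real p - 3) * (3 * real p + 1) / 16 * pi) * \<i>)
      = exp (\<i> * complex_of_real (pi * ((real n - 1)*(3*real n + 2)/4)))"
  proof -
    have rp: "real p = 2 * real n + 1" using pm nm p2 by linarith
    have "(real p - 3) * (3 * real p + 1) / 16 * pi = pi * ((real n - 1)*(3*real n + 2)/4)"
      unfolding rp by (simp add: field_simps)
    thus ?thesis by (simp add: mult.commute)
  qed
  have c2: "(\<Prod>(i,j)\<in>Sn n. (of_nat g ^ (2 * j) - of_nat g ^ (2 * i) :: complex))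
     - exp (\<i> * complex_of_real (pi * ((real n - 1)*(3*real n + 2)/4))) * of_nat n ^ m \<in> P"
    using cong unfolding Z VV .
  show ?thesis using c2 unfolding ex m4 n_def[symmetric] Sn_def .
qed

end
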